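(* Consider a particle in the plane with dimensionless canonical observables $x,y,p_x,p_y$ ($[x,p_x]=[y,p_y]=i$, other commutators zero) and Hamiltonian $H(t)=\tfrac12\big(p_x^2+p_y^2+\beta(t)^2(x^2+y^2)\big)-\beta(t)M_z$, $M_z=xp_y-yp_x$, where $\beta:\mathbb R\to\mathbb R$ is piecewise continuous, periodic with period $1$, satisfies $\beta(k)=0$ for all $k\in\mathbb Z$, and $\int_0^1\beta(t)\,dt=0$. Let $u(t)$ be the $4\times4$ evolution matrix, $(x(t),y(t),p_x(t),p_y(t))^T=u(t)(x,y,p_x,p_y)^T$ for the classical or Heisenberg variables. Suppose the evolution is a loop that closes for the first time after $n>1$ periods, i.e. $u(n)=\mathbb 1$ and $u(j)\neq\mathbb 1$ for $j=1,\dots,n-1$. Then the loop center $\mathbf X=\frac1n\int_0^n(x(t),y(t))\,dt$ vanishes identically.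
   Context: Time is dimensionless (period of $\beta$ equal to $1$), $\hbar=1$, unit mass. The Hamiltonian is quadratic, so the classical and Heisenberg trajectories are given by the same real matrix $u(t)$. *)

theory Defs
  imports "HOL-Analysis.Analysis"
begin

text \<open>Piecewise continuity of a real function on the real line: on every compact
  interval there are only finitely many discontinuities, and at each of them
  both one-sided limits exist (and are finite).\<close>
definition piecewise_continuous :: "(real \<Rightarrow> real) \<Rightarrow> bool" where
  "piecewise_continuous f \<longleftrightarrow>
     (\<forall>a b. \<exists>S. finite S \<and> (\<forall>x\<in>{a..b} - S. isCont f x) \<and>
        (\<forall>s\<in>S. (\<exists>l. (f \<longlongrightarrow> l) (at_left s)) \<and> (\<exists>l. (f \<longlongrightarrow> l) (at_right s))))"

text \<open>Coefficient matrix of the linear Hamiltonian equations for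
  H = 1/2 (px^2 + py^2 + beta^2 (x^2+y^2)) - beta (x py - y px), state (x, y, px, py):
  x' = px + beta y, y' = py - beta x, px' = -beta^2 x + beta py, py' = -beta^2 y - beta px.\<close>
definition ham_matrix :: "real \<Rightarrow> real^4^4" where
  "ham_matrix b = vector [vector [0, b, 1, 0],
                          vector [-b, 0, 0, 1],
                          vector [-(b^2), 0, 0, b],
                          vector [0, -(b^2), -b, 0]]"

text \<open>u is the evolution matrix: u(0) = 1 and u' = A(t) u in the Caratheodory
  (integral) sense, which is the appropriate notion for piecewise continuous beta.\<close>
definition is_evolution :: "(real \<Rightarrow> real) \<Rightarrow> (real \<Rightarrow> real^4^4) \<Rightarrow> bool" where
  "is_evolution \<beta> u \<longleftrightarrow>
     (\<forall>t\<ge>0. ((\<lambda>s. ham_matrix (\<beta> s) ** u s) has_integral (u t - mat 1)) {0..t})"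

end

theory Submission
  imports Defs
begin


lemma uniq_lemma:
  fixes y g :: "real \<Rightarrow> 'a::euclidean_space"
  assumes hi: "\<And>t. t \<ge> 0 \<Longrightarrow> (g has_integral y t) {0..t}"
    and bd: "\<And>s. s \<ge> 0 \<Longrightarrow> norm (g s) \<le> K * norm (y s)" and K: "K \<ge> 0"
    and t: "t \<ge> 0"
  shows "y t = 0"
proof -
  have int: "g integrable_on {0..t}" using hi t by blast
  have yeq: "\<And>s. s \<in> {0..t} \<Longrightarrow> y s = integral {0..s} g"
  proof -
    fix s assume "s \<in> {0..t}"
    then have "(g has_integral y s) {0..s}" using hi by simp
    then show "y s = integral {0..s} g" by (simp add: integral_unique)
  qed
  have cont: "continuous_on {0..t} y"
    using indefinite_integral_continuous_1[OF int] yeq by (metis (no_types, lifting) continuous_on_cong)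
  have "bounded (y ` {0..t})"
    using compact_continuous_image[OF cont] compact_imp_bounded by blast
  then obtain m where m: "\<And>s. s \<in> {0..t} \<Longrightarrow> norm (y s) \<le> m"
    unfolding bounded_iff by blast
  have m0: "m \<ge> 0" using m[of t] t by (meson atLeastAtMost_iff norm_ge_zero order.trans order_refl)
  have P: "\<forall>s\<in>{0..t}. norm (y s) \<le> m * (K * s)^k / fact k" for k
  proof (induction k)
    case 0
    then show ?case using m by simp
  next
    case (Suc k)
    show ?case
    proof
      fix s assume s: "s \<in> {0..t}"
      have der: "((\<lambda>r. m * (K * r)^(Suc k) / fact (Suc k)) has_vector_derivative
               K * (m * (K * r)^k / fact k)) (at r within {0..s})" for r
      proof -
        have "((\<lambda>r. m * (K * r)^(Suc k) / fact (Suc k)) has_real_derivative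
               m * (real (Suc k) * (K * r)^k * K) / fact (Suc k)) (at r within {0..s})"
          apply (rule derivative_eq_intros refl)+
          apply simp
          apply (simp add: divide_simps)
          done
        moreover have "m * (real (Suc k) * (K * r)^k * K) / fact (Suc k) = K * (m * (K * r)^k / fact k)"
          proof -
          have f: "(fact (Suc k)::real) = real (Suc k) * fact k" by simp
          have "m * (real (Suc k) * (K * r)^k * K) / fact (Suc k)
               = (real (Suc k) * (K * (m * (K * r)^k))) / (real (Suc k) * fact k)"
            unfolding f by (simp only: ac_simps)
          also have "\<dots> = K * (m * (K * r)^k) / fact k"
            by (rule mult_divide_mult_cancel_left) simp
          finally show ?thesis by simp
        qed
        ultimately show ?thesis
          using has_real_derivative_iff_has_vector_derivative by metis
      qed
      have hI: "((\<lambda>r. K * (m * (K * r)^k / fact k)) has_integral m * (K * s)^(Suc k) / fact (Suc k)) {0..s}"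
        using fundamental_theorem_of_calculus[of 0 s "\<lambda>r. m * (K * r)^(Suc k) / fact (Suc k)" "\<lambda>r. K * (m * (K * r)^k / fact k)"] der s by simp
      have "norm (y s) = norm (integral {0..s} g)" using yeq s by simp
      also have "\<dots> \<le> integral {0..s} (\<lambda>r. K * (m * (K * r)^k / fact k))"
      proof (rule integral_norm_bound_integral)
        show "g integrable_on {0..s}" using hi s by auto
        show "(\<lambda>r. K * (m * (K * r)^k / fact k)) integrable_on {0..s}" using hI by blast
        fix r assume r: "r \<in> {0..s}"
        then have "r \<in> {0..t}" using s by auto
        then have "norm (y r) \<le> m * (K * r)^k / fact k" using Suc by blast
        then show "norm (g r) \<le> K * (m * (K * r)^k / fact k)"
          using bd[of r] r K by (meson atLeastAtMost_iff mult_left_mono order.trans)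
      qed
      also have "\<dots> = m * (K * s)^(Suc k) / fact (Suc k)" using hI integral_unique by blast
      finally show "norm (y s) \<le> m * (K * s)^(Suc k) / fact (Suc k)" .
    qed
  qed
  have lim: "(\<lambda>k. m * ((K * t)^k / fact k)) \<longlonglongrightarrow> m * 0"
  proof (rule tendsto_mult_left)
    have "summable (\<lambda>k. inverse (fact k) * (K * t)^k)" by (rule summable_exp)
    then have "(\<lambda>k. inverse (fact k) * (K * t)^k) \<longlonglongrightarrow> 0" by (rule summable_LIMSEQ_zero)
    then show "(\<lambda>k. (K * t)^k / fact k) \<longlonglongrightarrow> 0" by (simp add: field_simps)
  qed
  have "norm (y t) \<le> 0"
  proof (rule tendsto_le[OF _ _ tendsto_const])
    show "(\<lambda>k. m * ((K * t)^k / fact k)) \<longlonglongrightarrow> 0" using lim by simp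
    show "\<forall>\<^sub>F k in sequentially. norm (y t) \<le> m * ((K * t)^k / fact k)"
      using P t by auto
  qed simp
  then show ?thesis by simp
qed



lemma vector_4 [simp]:
 "(vector [x,y,z,w] ::('a::zero)^4)$1 = x"
 "(vector [x,y,z,w] ::('a::zero)^4)$2 = y"
 "(vector [x,y,z,w] ::('a::zero)^4)$3 = z"
 "(vector [x,y,z,w] ::('a::zero)^4)$4 = w"
  unfolding vector_def by simp_all

lemma ham_mv:
  "(ham_matrix b *v w) $ 1 = b * w$2 + w$3"
  "(ham_matrix b *v w) $ 2 = - b * w$1 + w$4"
  "(ham_matrix b *v w) $ 3 = - (b^2) * w$1 + b * w$4"
  "(ham_matrix b *v w) $ 4 = - (b^2) * w$2 - b * w$3"
  by (simp_all add: ham_matrix_def matrix_vector_mult_def sum_4)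

lemma vec4_eq: "(x::real^4) = y \<longleftrightarrow> x$1 = y$1 \<and> x$2 = y$2 \<and> x$3 = y$3 \<and> x$4 = y$4"
  by (simp add: vec_eq_iff forall_4)

lemma bl_mv: "bounded_linear (\<lambda>M::real^'n^'m. M *v v)"
proof -
  have "linear (\<lambda>M::real^'n^'m. M *v v)"
    by (rule linearI) (simp_all add: matrix_vector_mult_add_rdistrib scaleR_matrix_vector_assoc)
  then show ?thesis by (simp add: linear_conv_bounded_linear)
qed

lemma evol_vec:
  assumes evol: "is_evolution \<beta> u" and t: "t \<ge> 0"
  shows "((\<lambda>s. ham_matrix (\<beta> s) *v (u s *v v)) has_integral (u t *v v - v)) {0..t}"
proof -
  have "((\<lambda>s. ham_matrix (\<beta> s) ** u s) has_integral (u t - mat 1)) {0..t}"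
    using evol t unfolding is_evolution_def by blast
  from has_integral_linear[OF this bl_mv[of v]]
  show ?thesis by (simp add: o_def matrix_vector_mul_assoc matrix_vector_mult_diff_rdistrib)
qed

lemma evol_u0:
  assumes evol: "is_evolution \<beta> u"
  shows "u 0 = mat 1"
proof -
  have "((\<lambda>s. ham_matrix (\<beta> s) ** u s) has_integral (u 0 - mat 1)) {0}"
    using evol unfolding is_evolution_def by fastforce
  then have "u 0 - mat 1 = 0"
    by (rule has_integral_unique) (rule has_integral_refl(2))
  then show ?thesis by simp
qed

definition jr :: "real^4 \<Rightarrow> real^4" where
  "jr w = vector [- w$2, w$1, - w$4, w$3]"

lemma jr_nth [simp]: "jr w $ 1 = - w$2" "jr w $ 2 = w$1" "jr w $ 3 = - w$4" "jr w $ 4 = w$3"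
  by (simp_all add: jr_def)

lemma ham_jr: "ham_matrix b *v jr w = jr (ham_matrix b *v w)"
  by (simp add: vec4_eq ham_mv algebra_simps)

lemma bl_jr: "bounded_linear jr"
proof -
  have "linear jr"
    by (rule linearI) (simp_all add: vec4_eq)
  then show ?thesis by (simp add: linear_conv_bounded_linear)
qed

lemma ham_norm:
  assumes "\<bar>b\<bar> \<le> B"
  shows "norm (ham_matrix b *v w) \<le> (4 * (1 + B + B^2)) * norm w"
proof -
  let ?C = "1 + B + B^2"
  have B0: "B \<ge> 0" using assms by linarith
  have bb: "b^2 \<le> B^2" using assms by (metis abs_ge_zero power2_abs power_mono)
  have c: "\<And>i. \<bar>w $ i\<bar> \<le> norm w" by (rule component_le_norm_cart)
  have nw: "norm w \<ge> 0" by simp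
  have "\<bar>(ham_matrix b *v w) $ i\<bar> \<le> ?C * norm w" for i
  proof -
    have h1: "\<bar>b * w$j\<bar> \<le> B * norm w" for j
      by (simp add: abs_mult assms c mult_mono')
    have h2: "\<bar>b^2 * w$j\<bar> \<le> B^2 * norm w" for j
      using bb c[of j] by (simp add: abs_mult mult_mono')
    have h3: "B^2 * norm w \<ge> 0" "B * norm w \<ge> 0" using B0 by auto
    have C: "?C * norm w = norm w + B * norm w + B^2 * norm w" by (simp add: algebra_simps)
    consider "i = 1" | "i = 2" | "i = 3" | "i = 4" using exhaust_4 by blast
    then show ?thesis
    proof cases
      case 1
      have e: "(ham_matrix b *v w) $ i = b * w$2 + w$3" using 1 ham_mv by simp
      show ?thesis unfolding e C using abs_triangle_ineq[of "b * w$2" "w$3"] h1[of 2] c[of 3] h3 by linarith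
    next
      case 2
      have e: "(ham_matrix b *v w) $ i = - b * w$1 + w$4" using 2 ham_mv by simp
      have a: "\<bar>- b * w$1\<bar> = \<bar>b * w$1\<bar>" by simp
      show ?thesis unfolding e C using abs_triangle_ineq[of "- b * w$1" "w$4"] a h1[of 1] c[of 4] h3 by linarith
    next
      case 3
      have e: "(ham_matrix b *v w) $ i = - (b^2) * w$1 + b * w$4" using 3 ham_mv by simp
      have a: "\<bar>- (b^2) * w$1\<bar> = \<bar>b^2 * w$1\<bar>" by simp
      show ?thesis unfolding e C using abs_triangle_ineq[of "- (b^2) * w$1" "b * w$4"] a h2[of 1] h1[of 4] nw h3 by linarith
    next
      case 4
      have e: "(ham_matrix b *v w) $ i = - (b^2) * w$2 - b * w$3" using 4 ham_mv by simp
      have a: "\<bar>- (b^2) * w$2\<bar> = \<bar>b^2 * w$2\<bar>" by simp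
      show ?thesis unfolding e C using abs_triangle_ineq4[of "- (b^2) * w$2" "b * w$3"] a h2[of 2] h1[of 3] nw h3 by linarith
    qed
  qed
  then have "(\<Sum>i\<in>UNIV. \<bar>(ham_matrix b *v w) $ i\<bar>) \<le> (\<Sum>i\<in>(UNIV::4 set). ?C * norm w)"
    by (rule sum_mono)
  also have "\<dots> = 4 * ?C * norm w" by simp
  finally show ?thesis using norm_le_l1_cart[of "ham_matrix b *v w"] by simp
qed



lemma per_nat: assumes per: "\<forall>t. \<beta> (t + 1) = \<beta> t"
  shows "\<beta> (t + real k) = \<beta> t"
proof (induction k)
  case (Suc k)
  have "\<beta> (t + real (Suc k)) = \<beta> ((t + real k) + 1)" by (simp add: algebra_simps)
  then show ?case using per Suc by simp
qed simp

lemma per_int: assumes per: "\<forall>t. \<beta> (t + 1) = \<beta> t"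
  shows "\<beta> (t + real_of_int k) = \<beta> t"
proof (cases "k \<ge> 0")
  case True
  then have "real (nat k) = real_of_int k" by (rule of_nat_nat)
  then have e: "t + real_of_int k = t + real (nat k)" by linarith
  show ?thesis unfolding e by (rule per_nat[OF per])
next
  case False
  define m where "m = nat (-k)"
  have "real m = real_of_int (-k)" unfolding m_def using False by (intro of_nat_nat) simp
  then have e: "t + real_of_int k = t - real m" by simp
  have "\<beta> ((t - real m) + real m) = \<beta> (t - real m)" by (rule per_nat[OF per])
  then show ?thesis unfolding e by simp
qed

lemma local_bound:
  fixes f :: "real \<Rightarrow> real"
  assumes l: "(f \<longlongrightarrow> l1) (at_left x)" and r: "(f \<longlongrightarrow> l2) (at_right x)"
  shows "\<exists>d>0. \<exists>B. \<forall>y. \<bar>y - x\<bar> < d \<longrightarrow> \<bar>f y\<bar> \<le> B"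
proof -
  have "eventually (\<lambda>y. dist (f y) l1 < 1) (at_left x)" using l tendstoD by force
  then obtain b1 where b1: "b1 < x" "\<And>y. y > b1 \<Longrightarrow> y < x \<Longrightarrow> dist (f y) l1 < 1"
    unfolding eventually_at_left_field by blast
  have "eventually (\<lambda>y. dist (f y) l2 < 1) (at_right x)" using r tendstoD by force
  then obtain b2 where b2: "b2 > x" "\<And>y. y > x \<Longrightarrow> y < b2 \<Longrightarrow> dist (f y) l2 < 1"
    unfolding eventually_at_right_field by blast
  define B where "B = \<bar>l1\<bar> + \<bar>l2\<bar> + \<bar>f x\<bar> + 1"
  have "\<forall>y. \<bar>y - x\<bar> < min (x - b1) (b2 - x) \<longrightarrow> \<bar>f y\<bar> \<le> B"
  proof (intro allI impI)
    fix y assume y: "\<bar>y - x\<bar> < min (x - b1) (b2 - x)"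
    consider "y < x" | "y = x" | "y > x" by linarith
    then show "\<bar>f y\<bar> \<le> B"
    proof cases
      case 1 then have "dist (f y) l1 < 1" using y b1 by auto
      then show ?thesis unfolding B_def dist_real_def by linarith
    next
      case 2 then show ?thesis unfolding B_def by simp
    next
      case 3 then have "dist (f y) l2 < 1" using y b2 by auto
      then show ?thesis unfolding B_def dist_real_def by linarith
    qed
  qed
  moreover have "min (x - b1) (b2 - x) > 0" using b1 b2 by simp
  ultimately show ?thesis by blast
qed

lemma pc_onesided:
  assumes pc: "piecewise_continuous \<beta>"
  obtains S where "finite S" "\<forall>x\<in>{a..b} - S. isCont \<beta> x"
    "\<forall>x\<in>{a..b}. (\<exists>l. (\<beta> \<longlongrightarrow> l) (at_left x)) \<and> (\<exists>l. (\<beta> \<longlongrightarrow> l) (at_right x))"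
proof -
  obtain S where S: "finite S" "\<forall>x\<in>{a..b} - S. isCont \<beta> x"
    "\<forall>s\<in>S. (\<exists>l. (\<beta> \<longlongrightarrow> l) (at_left s)) \<and> (\<exists>l. (\<beta> \<longlongrightarrow> l) (at_right s))"
    using pc unfolding piecewise_continuous_def by blast
  have "(\<exists>l. (\<beta> \<longlongrightarrow> l) (at_left x)) \<and> (\<exists>l. (\<beta> \<longlongrightarrow> l) (at_right x))" if x: "x \<in> {a..b}" for x
  proof (cases "x \<in> S")
    case True then show ?thesis using S by blast
  next
    case False
    then have "isCont \<beta> x" using S x by blast
    then have "(\<beta> \<longlongrightarrow> \<beta> x) (at x)" by (simp add: isCont_def)
    then show ?thesis using filterlim_at_split by blast
  qed
  then show ?thesis using S that by blast
qed

lemma pc_bounded01: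
  assumes pc: "piecewise_continuous \<beta>"
  shows "\<exists>B. \<forall>y\<in>{0..1}. \<bar>\<beta> y\<bar> \<le> B"
proof -
  obtain S0 where S: "finite S0" "\<forall>x\<in>{0..1::real} - S0. isCont \<beta> x"
     "\<forall>x\<in>{0..1::real}. (\<exists>l. (\<beta> \<longlongrightarrow> l) (at_left x)) \<and> (\<exists>l. (\<beta> \<longlongrightarrow> l) (at_right x))"
    by (rule pc_onesided[OF pc])
  have "\<forall>x\<in>{0..1::real}. \<exists>d>0. \<exists>B. \<forall>y. \<bar>y - x\<bar> < d \<longrightarrow> \<bar>\<beta> y\<bar> \<le> B"
    using S(3) local_bound by metis
  then obtain d B where dB: "\<And>x. x \<in> {0..1::real} \<Longrightarrow> d x > 0 \<and> (\<forall>y. \<bar>y - x\<bar> < d x \<longrightarrow> \<bar>\<beta> y\<bar> \<le> B x)"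
    by metis
  have cov: "{0..1::real} \<subseteq> (\<Union>x\<in>{0..1}. ball x (d x))"
    using dB by force
  obtain T where T: "T \<subseteq> {0..1}" "finite T" "{0..1::real} \<subseteq> (\<Union>x\<in>T. ball x (d x))"
    using compactE_image[OF compact_Icc _ cov] by blast
  have "\<bar>\<beta> y\<bar> \<le> (\<Sum>x\<in>T. \<bar>B x\<bar>)" if y: "y \<in> {0..1}" for y
  proof -
    obtain x where x: "x \<in> T" "y \<in> ball x (d x)" using T y by blast
    then have "\<bar>\<beta> y\<bar> \<le> B x" using dB[of x] T(1) by (auto simp: dist_real_def abs_minus_commute)
    also have "\<dots> \<le> \<bar>B x\<bar>" by simp
    also have "\<dots> \<le> (\<Sum>x\<in>T. \<bar>B x\<bar>)" using x(1) T(2) by (intro member_le_sum) auto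
    finally show ?thesis .
  qed
  then show ?thesis by blast
qed

lemma pc_bounded:
  assumes pc: "piecewise_continuous \<beta>" and per: "\<forall>t. \<beta> (t + 1) = \<beta> t"
  shows "\<exists>B. \<forall>y. \<bar>\<beta> y\<bar> \<le> B"
proof -
  obtain B where B: "\<forall>y\<in>{0..1}. \<bar>\<beta> y\<bar> \<le> B" using pc_bounded01[OF pc] by blast
  have "\<bar>\<beta> y\<bar> \<le> B" for y
  proof -
    have "\<beta> y = \<beta> ((y - of_int \<lfloor>y\<rfloor>) + of_int \<lfloor>y\<rfloor>)" by simp
    also have "\<dots> = \<beta> (y - of_int \<lfloor>y\<rfloor>)" by (rule per_int[OF per])
    finally show ?thesis using B by (simp add: floor_le_iff less_imp_le) (metis B atLeastAtMost_iff floor_correct less_eq_real_def diff_ge_0_iff_ge  frac_def frac_lt_1 )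
  qed
  then show ?thesis by blast
qed

lemma pc_integrable01:
  assumes pc: "piecewise_continuous \<beta>"
  shows "\<beta> integrable_on {0..1}"
proof -
  obtain S where S: "finite S" "\<forall>x\<in>{0..1::real} - S. isCont \<beta> x"
     "\<forall>x\<in>{0..1::real}. (\<exists>l. (\<beta> \<longlongrightarrow> l) (at_left x)) \<and> (\<exists>l. (\<beta> \<longlongrightarrow> l) (at_right x))"
    by (rule pc_onesided[OF pc])
  obtain B where B: "\<forall>y\<in>{0..1}. \<bar>\<beta> y\<bar> \<le> B" using pc_bounded01[OF pc] by blast
  have neg: "negligible S" using S(1) by (simp add: negligible_finite)
  have meas: "{0..1::real} - S \<in> sets lebesgue"
    using S(1) by (simp add: finite_imp_closed sets.Diff)
  have "continuous_on ({0..1} - S) \<beta>"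
    using S(2) by (simp add: continuous_at_imp_continuous_on)
  then have bm: "\<beta> \<in> borel_measurable (lebesgue_on ({0..1} - S))"
    using continuous_imp_measurable_on_sets_lebesgue meas by blast
  have ci: "(\<lambda>_. B) integrable_on ({0..1::real} - S)"
    by (rule integrable_spike_set[of _ "{0..1}"]) (auto intro: negligible_subset[OF neg])
  have "\<beta> integrable_on ({0..1} - S)"
    by (rule measurable_bounded_by_integrable_imp_integrable_real[OF bm ci _ meas]) (use B in auto)
  then show ?thesis
    by (rule integrable_spike_set) (auto intro: negligible_subset[OF neg])
qed



locale qsys =
  fixes \<beta> :: "real \<Rightarrow> real" and u :: "real \<Rightarrow> real^4^4"
  assumes pc: "piecewise_continuous \<beta>" and per: "\<forall>t. \<beta> (t + 1) = \<beta> t"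
    and mean_zero: "integral {0..1} \<beta> = 0" and evol: "is_evolution \<beta> u"
begin

definition Bb where "Bb = (SOME B. \<forall>y. \<bar>\<beta> y\<bar> \<le> B)"

lemma Bb: "\<bar>\<beta> y\<bar> \<le> Bb"
  using someI_ex[OF pc_bounded[OF pc per]] unfolding Bb_def by blast

definition KK where "KK = 4 * (1 + Bb + Bb^2)"

lemma KK0: "KK \<ge> 0"
proof -
  have "Bb \<ge> 0" using Bb[of 0] by linarith
  then show ?thesis unfolding KK_def by simp
qed

lemma hamK: "norm (ham_matrix (\<beta> s) *v w) \<le> KK * norm w"
  unfolding KK_def by (rule ham_norm[OF Bb])

lemma ev: "t \<ge> 0 \<Longrightarrow> ((\<lambda>s. ham_matrix (\<beta> s) *v (u s *v v)) has_integral (u t *v v - v)) {0..t}"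
  by (rule evol_vec[OF evol])

lemma u0: "u 0 = mat 1" by (rule evol_u0[OF evol])

lemma uniq:
  assumes "\<And>t. t \<ge> 0 \<Longrightarrow> ((\<lambda>s. ham_matrix (\<beta> s) *v y s) has_integral y t) {0..t}" "t \<ge> 0"
  shows "y t = 0"
  by (rule uniq_lemma[OF assms(1) hamK KK0 assms(2)])

lemma shift1:
  assumes t: "t \<ge> 0"
  shows "u (t + 1) *v v = u t *v (u 1 *v v)"
proof -
  define y where "y t = u (t + 1) *v v - u t *v (u 1 *v v)" for t
  have "y t = 0"
  proof (rule uniq[OF _ t])
    fix t :: real assume t: "t \<ge> 0"
    let ?f = "\<lambda>s. ham_matrix (\<beta> s) *v (u s *v v)"
    have h1: "(?f has_integral (u (t + 1) *v v - v)) {0..t + 1}" using ev t by simp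
    have h0: "(?f has_integral (u 1 *v v - v)) {0..1}" using ev by simp
    have "?f integrable_on {1..t + 1}"
      by (rule integrable_subinterval_real[OF has_integral_integrable[OF h1]]) (use t in auto)
    then obtain I where I: "(?f has_integral I) {1..t + 1}" by blast
    have "(?f has_integral ((u 1 *v v - v) + I)) {0..t + 1}"
      by (rule has_integral_combine[OF _ _ h0 I]) (use t in auto)
    then have "(u 1 *v v - v) + I = u (t + 1) *v v - v" using h1 by (rule has_integral_unique)
    then have Ieq: "I = u (t + 1) *v v - u 1 *v v" by (simp add: algebra_simps)
    have "((\<lambda>s. ?f (s + 1)) has_integral I) {1 - 1..t + 1 - 1}"
      by (rule has_integral_shift_real_ivl[OF I])
    then have a: "((\<lambda>s. ham_matrix (\<beta> s) *v (u (s + 1) *v v)) has_integral (u (t + 1) *v v - u 1 *v v)) {0..t}"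
      using per Ieq by simp
    have b: "((\<lambda>s. ham_matrix (\<beta> s) *v (u s *v (u 1 *v v))) has_integral (u t *v (u 1 *v v) - u 1 *v v)) {0..t}"
      using ev t by blast
    from has_integral_diff[OF a b]
    show "((\<lambda>s. ham_matrix (\<beta> s) *v y s) has_integral y t) {0..t}"
      by (simp add: y_def matrix_vector_mult_diff_distrib)
  qed
  then show ?thesis unfolding y_def by simp
qed

lemma jcomm:
  assumes t: "t \<ge> 0"
  shows "u t *v jr v = jr (u t *v v)"
proof -
  define y where "y t = u t *v jr v - jr (u t *v v)" for t
  have lj: "linear jr" using bl_jr bounded_linear.linear by blast
  have "y t = 0"
  proof (rule uniq[OF _ t])
    fix t :: real assume t: "t \<ge> 0"
    have a: "((\<lambda>s. ham_matrix (\<beta> s) *v (u s *v jr v)) has_integral (u t *v jr v - jr v)) {0..t}"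
      using ev t by blast
    have "((jr \<circ> (\<lambda>s. ham_matrix (\<beta> s) *v (u s *v v))) has_integral jr (u t *v v - v)) {0..t}"
      by (rule has_integral_linear[OF ev[OF t] bl_jr])
    then have b: "((\<lambda>s. ham_matrix (\<beta> s) *v jr (u s *v v)) has_integral (jr (u t *v v) - jr v)) {0..t}"
      by (simp add: o_def ham_jr linear_diff[OF lj])
    from has_integral_diff[OF a b]
    show "((\<lambda>s. ham_matrix (\<beta> s) *v y s) has_integral y t) {0..t}"
      by (simp add: y_def matrix_vector_mult_diff_distrib)
  qed
  then show ?thesis unfolding y_def by simp
qed

definition P :: "nat \<Rightarrow> real^4 \<Rightarrow> real^4" where "P k = ((*v) (u 1) ^^ k)"

lemma shiftk:
  assumes t: "t \<ge> 0"
  shows "u (t + real k) *v v = u t *v P k v"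
proof (induction k arbitrary: v)
  case 0 then show ?case by (simp add: P_def)
next
  case (Suc k)
  have "u (t + real (Suc k)) *v v = u ((t + real k) + 1) *v v" by (simp add: algebra_simps)
  also have "\<dots> = u (t + real k) *v (u 1 *v v)" using shift1 t by simp
  also have "\<dots> = u t *v P k (u 1 *v v)" by (rule Suc)
  also have "P k (u 1 *v v) = P (Suc k) v" unfolding P_def by (simp add: funpow_Suc_right del: funpow.simps)
  finally show ?case .
qed

lemma uk: "u (real k) *v v = P k v"
  using shiftk[of 0 k v] by (simp add: u0)

lemma cont_sol: "continuous_on {0..T} (\<lambda>t. u t *v v)"
proof (cases "T \<ge> 0")
  case True
  let ?f = "\<lambda>s. ham_matrix (\<beta> s) *v (u s *v v)"
  have int: "?f integrable_on {0..T}" using ev True by blast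
  have eq: "u t *v v = v + integral {0..t} ?f" if "t \<in> {0..T}" for t
  proof -
    have "(?f has_integral (u t *v v - v)) {0..t}" using ev that by simp
    then have "integral {0..t} ?f = u t *v v - v" by (rule integral_unique)
    then show ?thesis by simp
  qed
  have "continuous_on {0..T} (\<lambda>t. v + integral {0..t} ?f)"
    by (intro continuous_intros indefinite_integral_continuous_1 int)
  then show ?thesis using eq by (metis (no_types, lifting) continuous_on_cong)
next
  case False then show ?thesis by simp
qed

end


lemma vr_deriv:
  fixes p1 p2 p3 p4 q1 q2 q3 q4 th :: "real \<Rightarrow> real"
  assumes th: "(th has_real_derivative b) (at x within S)"
    and p1: "(p1 has_real_derivative (b * p2 x + p3 x)) (at x within S)"
    and p2: "(p2 has_real_derivative (- b * p1 x + p4 x)) (at x within S)"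
    and p3: "(p3 has_real_derivative (- (b^2) * p1 x + b * p4 x)) (at x within S)"
    and p4: "(p4 has_real_derivative (- (b^2) * p2 x - b * p3 x)) (at x within S)"
    and q1: "(q1 has_real_derivative (b * q2 x + q3 x)) (at x within S)"
    and q2: "(q2 has_real_derivative (- b * q1 x + q4 x)) (at x within S)"
    and q3: "(q3 has_real_derivative (- (b^2) * q1 x + b * q4 x)) (at x within S)"
    and q4: "(q4 has_real_derivative (- (b^2) * q2 x - b * q3 x)) (at x within S)"
  shows "((\<lambda>t. cos (2 * th t) * (p1 t * q3 t - p2 t * q4 t - q1 t * p3 t + q2 t * p4 t)
              - sin (2 * th t) * (p1 t * q4 t + p2 t * q3 t - q1 t * p4 t - q2 t * p3 t))
          has_real_derivative 0) (at x within S)"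
    and "((\<lambda>t. sin (2 * th t) * (p1 t * q3 t - p2 t * q4 t - q1 t * p3 t + q2 t * p4 t)
              + cos (2 * th t) * (p1 t * q4 t + p2 t * q3 t - q1 t * p4 t - q2 t * p3 t))
          has_real_derivative 0) (at x within S)"
   apply (rule derivative_eq_intros th p1 p2 p3 p4 q1 q2 q3 q4 refl)+
   apply (simp add: algebra_simps power2_eq_square)
  apply (rule derivative_eq_intros th p1 p2 p3 p4 q1 q2 q3 q4 refl)+
  apply (simp add: algebra_simps power2_eq_square)
  done

definition Zc :: "real^4 \<Rightarrow> complex" where "Zc w = Complex (w$1) (w$2)"
definition Pc :: "real^4 \<Rightarrow> complex" where "Pc w = Complex (w$3) (w$4)"
definition Wc :: "real^4 \<Rightarrow> real^4 \<Rightarrow> complex" where "Wc p q = Zc p * Pc q - Zc q * Pc p"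

lemma Wc_Re: "Re (Wc p q) = p$1 * q$3 - p$2 * q$4 - q$1 * p$3 + q$2 * p$4"
  by (simp add: Wc_def Zc_def Pc_def)
lemma Wc_Im: "Im (Wc p q) = p$1 * q$4 + p$2 * q$3 - q$1 * p$4 - q$2 * p$3"
  by (simp add: Wc_def Zc_def Pc_def)

context qsys begin

lemma comp_cont: "continuous_on {0..1} (\<lambda>t. (u t *v f) $ i)"
  by (intro continuous_intros cont_sol)

lemma comp_deriv:
  assumes x: "x \<in> {0..1}" and cx: "isCont \<beta> x"
  shows "((\<lambda>t. (u t *v f) $ i) has_real_derivative (ham_matrix (\<beta> x) *v (u x *v f)) $ i) (at x within {0..1})"
proof -
  let ?G = "\<lambda>s. (ham_matrix (\<beta> s) *v (u s *v f)) $ i"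
  have hG: "(?G has_integral ((u t *v f - f) $ i)) {0..t}" if "t \<ge> 0" for t
    using has_integral_linear[OF ev[OF that] bounded_linear_vec_nth[of i]] by (simp add: o_def)
  have int: "?G integrable_on {0..1}" using hG[OF zero_le_one] by blast
  have eq: "(u t *v f) $ i = f $ i + integral {0..t} ?G" if "t \<in> {0..1}" for t
  proof -
    have "integral {0..t} ?G = (u t *v f - f) $ i" using hG[of t] that by (simp add: integral_unique)
    then show ?thesis by simp
  qed
  have cb: "continuous (at x within {0..1}) \<beta>" using cx by (rule continuous_at_imp_continuous_at_within)
  have cc: "continuous (at x within {0..1}) (\<lambda>s. (u s *v f) $ j)" for j
    using comp_cont[of f j] x by (simp add: continuous_on_eq_continuous_within)
  have cG: "continuous (at x within {0..1}) ?G"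
  proof -
    consider "i = 1" | "i = 2" | "i = 3" | "i = 4" using exhaust_4 by blast
    then show ?thesis
      by cases (simp_all add: ham_mv; intro continuous_intros cb cc)+
  qed
  have "((\<lambda>t. integral {0..t} ?G) has_vector_derivative ?G x) (at x within ({0..1} - {}))"
    by (rule integral_has_vector_derivative_continuous_at[OF int]) (use x cG in auto)
  then have "((\<lambda>t. integral {0..t} ?G) has_real_derivative ?G x) (at x within {0..1})"
    by (simp add: has_real_derivative_iff_has_vector_derivative)
  then have "((\<lambda>t. f $ i + integral {0..t} ?G) has_real_derivative ?G x) (at x within {0..1})"
    by (auto intro!: derivative_eq_intros)
  then show ?thesis
    by (rule has_field_derivative_transform_within[where d=1]) (use x eq in auto)
qed

definition th where "th t = integral {0..t} \<beta>"

lemma th_cont: "continuous_on {0..1} th"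
  unfolding th_def by (rule indefinite_integral_continuous_1[OF pc_integrable01[OF pc]])

lemma th_deriv:
  assumes x: "x \<in> {0..1}" and cx: "isCont \<beta> x"
  shows "(th has_real_derivative \<beta> x) (at x within {0..1})"
proof -
  have cb: "continuous (at x within {0..1}) \<beta>" using cx by (rule continuous_at_imp_continuous_at_within)
  have "((\<lambda>t. integral {0..t} \<beta>) has_vector_derivative \<beta> x) (at x within ({0..1} - {}))"
    by (rule integral_has_vector_derivative_continuous_at[OF pc_integrable01[OF pc]]) (use x cb in auto)
  then show ?thesis unfolding th_def by (simp add: has_real_derivative_iff_has_vector_derivative)
qed

lemma wronsk: "Wc (u 1 *v f) (u 1 *v g) = Wc f g"
proof -
  obtain S where S: "finite S" "\<forall>x\<in>{0..1::real} - S. isCont \<beta> x"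
     "\<forall>x\<in>{0..1::real}. (\<exists>l. (\<beta> \<longlongrightarrow> l) (at_left x)) \<and> (\<exists>l. (\<beta> \<longlongrightarrow> l) (at_right x))"
    by (rule pc_onesided[OF pc])
  define p where "p i t = (u t *v f) $ i" for i t
  define q where "q i t = (u t *v g) $ i" for i t
  define Vr where "Vr t = cos (2 * th t) * (p 1 t * q 3 t - p 2 t * q 4 t - q 1 t * p 3 t + q 2 t * p 4 t)
              - sin (2 * th t) * (p 1 t * q 4 t + p 2 t * q 3 t - q 1 t * p 4 t - q 2 t * p 3 t)" for t
  define Vi where "Vi t = sin (2 * th t) * (p 1 t * q 3 t - p 2 t * q 4 t - q 1 t * p 3 t + q 2 t * p 4 t)
              + cos (2 * th t) * (p 1 t * q 4 t + p 2 t * q 3 t - q 1 t * p 4 t - q 2 t * p 3 t)" for t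
  have cp: "continuous_on {0..1} (p i)" for i unfolding p_def by (rule comp_cont)
  have cq: "continuous_on {0..1} (q i)" for i unfolding q_def by (rule comp_cont)
  have dV: "(Vr has_real_derivative 0) (at x within {0..1}) \<and> (Vi has_real_derivative 0) (at x within {0..1})"
    if x: "x \<in> {0..1} - S" for x
  proof -
    have x1: "x \<in> {0..1}" and cx: "isCont \<beta> x" using x S by auto
    have dp: "(p i has_real_derivative (ham_matrix (\<beta> x) *v (u x *v f)) $ i) (at x within {0..1})" for i
      unfolding p_def by (rule comp_deriv[OF x1 cx])
    have dq: "(q i has_real_derivative (ham_matrix (\<beta> x) *v (u x *v g)) $ i) (at x within {0..1})" for i
      unfolding q_def by (rule comp_deriv[OF x1 cx])
    note dp' = dp[of 1, unfolded ham_mv, folded p_def] dp[of 2, unfolded ham_mv, folded p_def]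
          dp[of 3, unfolded ham_mv, folded p_def] dp[of 4, unfolded ham_mv, folded p_def]
    note dq' = dq[of 1, unfolded ham_mv, folded q_def] dq[of 2, unfolded ham_mv, folded q_def]
          dq[of 3, unfolded ham_mv, folded q_def] dq[of 4, unfolded ham_mv, folded q_def]
    show ?thesis
      using vr_deriv[OF th_deriv[OF x1 cx] dp' dq'] unfolding Vr_def Vi_def by blast
  qed
  have z: "((*) (0::real)) = (\<lambda>h. 0)" by (rule ext) simp
  have cVr: "continuous_on {0..1} Vr" unfolding Vr_def
    by (intro continuous_intros cp cq th_cont)
  have cVi: "continuous_on {0..1} Vi" unfolding Vi_def
    by (intro continuous_intros cp cq th_cont)
  have "Vr 1 = Vr 0"
    by (rule has_derivative_zero_unique_strong_interval[OF S(1) cVr refl])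
       (use dV in \<open>auto simp: has_field_derivative_def z\<close>)
  moreover have "Vi 1 = Vi 0"
    by (rule has_derivative_zero_unique_strong_interval[OF S(1) cVi refl])
       (use dV in \<open>auto simp: has_field_derivative_def z\<close>)
  moreover have "th 1 = 0" using mean_zero by (simp add: th_def)
  moreover have "th 0 = 0" by (simp add: th_def)
  ultimately have "Re (Wc (u 1 *v f) (u 1 *v g)) = Re (Wc f g) \<and> Im (Wc (u 1 *v f) (u 1 *v g)) = Im (Wc f g)"
    unfolding Wc_Re Wc_Im by (simp add: Vr_def Vi_def p_def q_def u0)
  then show ?thesis by (simp add: complex_eq_iff)
qed

end


lemma Zc_add: "Zc (x + y) = Zc x + Zc y" and Pc_add: "Pc (x + y) = Pc x + Pc y"
  and Zc_scale: "Zc (r *\<^sub>R x) = of_real r * Zc x" and Pc_scale: "Pc (r *\<^sub>R x) = of_real r * Pc x"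
  and Zc_jr: "Zc (jr x) = \<i> * Zc x" and Pc_jr: "Pc (jr x) = \<i> * Pc x"
  by (simp_all add: Zc_def Pc_def complex_eq_iff)

lemma ZP_eq: "x = y \<longleftrightarrow> Zc x = Zc y \<and> Pc x = Pc y"
  by (auto simp: Zc_def Pc_def vec4_eq)

lemma fixed_zero:
  fixes U :: "real^4^4"
  assumes jc: "\<And>w. U *v jr w = jr (U *v w)"
    and W: "Wc (U *v axis 1 1) (U *v axis 3 1) = 1"
    and pn: "\<And>w. ((*v) U ^^ n) w = w" and n: "n > 0"
    and ne: "U \<noteq> mat 1"
    and fx: "U *v f = f"
  shows "f = 0"
proof (rule ccontr)
  assume f0: "f \<noteq> 0"
  define e1 :: "real^4" where "e1 = axis 1 1"
  define e3 :: "real^4" where "e3 = axis 3 1"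
  define a where "a = Zc (U *v e1)"
  define b where "b = Zc (U *v e3)"
  define c where "c = Pc (U *v e1)"
  define d where "d = Pc (U *v e3)"
  have Ze: "Zc e1 = 1" "Pc e1 = 0" "Zc e3 = 0" "Pc e3 = 1"
    by (simp_all add: e1_def e3_def Zc_def Pc_def axis_def complex_eq_iff)
  have lin: "Zc (U *v w) = Zc w * a + Pc w * b \<and> Pc (U *v w) = Zc w * c + Pc w * d" for w
  proof -
    have ew: "w = w$1 *\<^sub>R e1 + w$2 *\<^sub>R jr e1 + w$3 *\<^sub>R e3 + w$4 *\<^sub>R jr e3"
      by (simp add: vec4_eq e1_def e3_def axis_def)
    have "U *v w = U *v (w$1 *\<^sub>R e1 + w$2 *\<^sub>R jr e1 + w$3 *\<^sub>R e3 + w$4 *\<^sub>R jr e3)"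
      using ew by (rule arg_cong)
    also have "\<dots> = w$1 *\<^sub>R (U *v e1) + w$2 *\<^sub>R jr (U *v e1) + w$3 *\<^sub>R (U *v e3) + w$4 *\<^sub>R jr (U *v e3)"
      by (simp only: matrix_vector_right_distrib matrix_vector_mult_scaleR jc)
    finally have "U *v w = w$1 *\<^sub>R (U *v e1) + w$2 *\<^sub>R jr (U *v e1) + w$3 *\<^sub>R (U *v e3) + w$4 *\<^sub>R jr (U *v e3)" .
    then show ?thesis
      by (simp add: Zc_add Pc_add Zc_scale Pc_scale Zc_jr Pc_jr a_def b_def c_def d_def)
         (simp add: Zc_def Pc_def complex_eq_iff algebra_simps)
  qed
  have det: "a * d - b * c = 1" using W by (simp add: Wc_def a_def b_def c_def d_def e1_def e3_def)
  define z where "z = Zc f"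
  define p where "p = Pc f"
  have Z0: "Zc 0 = 0" "Pc 0 = 0" by (simp_all add: Zc_def Pc_def complex_eq_iff)
  have zp: "z \<noteq> 0 \<or> p \<noteq> 0" using f0 ZP_eq[of f 0] by (auto simp: z_def p_def Z0)
  have e1': "(a - 1) * z + b * p = 0" and e2': "c * z + (d - 1) * p = 0"
    using lin[of f] fx by (simp_all add: z_def p_def algebra_simps)
  have "((a - 1) * (d - 1) - b * c) * z = (d - 1) * ((a - 1) * z + b * p) - b * (c * z + (d - 1) * p)"
    by (simp add: algebra_simps)
  then have hz: "((a - 1) * (d - 1) - b * c) * z = 0" using e1' e2' by simp
  have "((a - 1) * (d - 1) - b * c) * p = (a - 1) * (c * z + (d - 1) * p) - c * ((a - 1) * z + b * p)"
    by (simp add: algebra_simps)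
  then have hp: "((a - 1) * (d - 1) - b * c) * p = 0" using e1' e2' by simp
  have "(a - 1) * (d - 1) - b * c = 0" using hz hp zp by auto
  then have tr: "a + d = 2" using det by (simp add: algebra_simps)
  have N1: "(a - 1) * (a - 1) + b * c = 0"
  proof -
    have "(a - 1) * (a - 1) + b * c = a * (a + d - 2) - (a * d - b * c) + 1" by (simp add: algebra_simps)
    then show ?thesis using tr det by simp
  qed
  have N2: "c * b + (d - 1) * (d - 1) = 0"
  proof -
    have "c * b + (d - 1) * (d - 1) = d * (a + d - 2) - (a * d - b * c) + 1" by (simp add: algebra_simps)
    then show ?thesis using tr det by simp
  qed
  have N3: "(a - 1) * b + b * (d - 1) = 0"
  proof -
    have "(a - 1) * b + b * (d - 1) = b * (a + d - 2)" by (simp add: algebra_simps)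
    then show ?thesis using tr by simp
  qed
  have N4: "c * (a - 1) + (d - 1) * c = 0"
  proof -
    have "c * (a - 1) + (d - 1) * c = c * (a + d - 2)" by (simp add: algebra_simps)
    then show ?thesis using tr by simp
  qed
  have pow: "Zc (((*v) U ^^ k) w) = Zc w + of_nat k * ((a - 1) * Zc w + b * Pc w) \<and>
             Pc (((*v) U ^^ k) w) = Pc w + of_nat k * (c * Zc w + (d - 1) * Pc w)" for k w
  proof (induction k)
    case 0 then show ?case by simp
  next
    case (Suc k)
    define Z where "Z = Zc w"
    define Q where "Q = Pc w"
    have IH: "Zc (((*v) U ^^ k) w) = Z + of_nat k * ((a - 1) * Z + b * Q)"
             "Pc (((*v) U ^^ k) w) = Q + of_nat k * (c * Z + (d - 1) * Q)"
      using Suc by (simp_all add: Z_def Q_def)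
    have s: "((*v) U ^^ Suc k) w = U *v (((*v) U ^^ k) w)" by simp
    have A: "(Z + of_nat k * ((a - 1) * Z + b * Q)) * a + (Q + of_nat k * (c * Z + (d - 1) * Q)) * b
           = Z + of_nat (Suc k) * ((a - 1) * Z + b * Q)"
    proof -
      have "(Z + of_nat k * ((a - 1) * Z + b * Q)) * a + (Q + of_nat k * (c * Z + (d - 1) * Q)) * b
           - (Z + of_nat (Suc k) * ((a - 1) * Z + b * Q))
           = of_nat k * (Z * ((a - 1) * (a - 1) + b * c) + Q * ((a - 1) * b + b * (d - 1)))"
        by (simp add: algebra_simps)
      then show ?thesis using N1 N3 by simp
    qed
    have B: "(Z + of_nat k * ((a - 1) * Z + b * Q)) * c + (Q + of_nat k * (c * Z + (d - 1) * Q)) * d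
           = Q + of_nat (Suc k) * (c * Z + (d - 1) * Q)"
    proof -
      have "(Z + of_nat k * ((a - 1) * Z + b * Q)) * c + (Q + of_nat k * (c * Z + (d - 1) * Q)) * d
           - (Q + of_nat (Suc k) * (c * Z + (d - 1) * Q))
           = of_nat k * (Z * (c * (a - 1) + (d - 1) * c) + Q * (c * b + (d - 1) * (d - 1)))"
        by (simp add: algebra_simps)
      then show ?thesis using N2 N4 by simp
    qed
    show ?case unfolding s using lin[of "((*v) U ^^ k) w"] IH A B by (simp add: Z_def Q_def)
  qed
  have van: "(a - 1) * Zc w + b * Pc w = 0 \<and> c * Zc w + (d - 1) * Pc w = 0" for w
  proof -
    have "of_nat n * ((a - 1) * Zc w + b * Pc w) = 0 \<and> of_nat n * (c * Zc w + (d - 1) * Pc w) = 0"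
      using pow[of n w] pn[of w] by simp
    then show ?thesis using n by simp
  qed
  have "a = 1" "c = 0" using van[of e1] Ze by simp_all
  moreover have "b = 0" "d = 1" using van[of e3] Ze by simp_all
  ultimately have "U *v w = w" for w using lin[of w] ZP_eq[of "U *v w" w] by simp
  then have "U = mat 1" by (simp add: matrix_eq)
  then show False using ne by simp
qed



context qsys begin

lemma int_sol: "0 \<le> a \<Longrightarrow> (\<lambda>t. u t *v v) integrable_on {a..b}"
  by (rule integrable_continuous_interval, rule continuous_on_subset[OF cont_sol[of "max a b"]]) auto

lemma decomp:
  "((\<lambda>t. u t *v v) has_integral integral {0..1} (\<lambda>t. u t *v (\<Sum>k<m. P k v))) {0..real m}"
proof (induction m)
  case 0
  have "((\<lambda>t. u t *v v) has_integral 0) {0}" by (rule has_integral_refl(2))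
  then show ?case by simp
next
  case (Suc m)
  have J: "((\<lambda>t. u t *v P m v) has_integral integral {0..1} (\<lambda>t. u t *v P m v)) {0..1}"
    using int_sol[of 0 "P m v" 1] by (simp add: integrable_integral)
  have J2: "((\<lambda>t. u (t + real m) *v v) has_integral integral {0..1} (\<lambda>t. u t *v P m v)) {0..1}"
    by (rule has_integral_eq[OF _ J]) (simp add: shiftk)
  have "((\<lambda>t. u (t + - real m + real m) *v v) has_integral integral {0..1} (\<lambda>t. u t *v P m v))
         {0 - - real m..1 - - real m}"
    by (rule has_integral_shift_real_ivl[OF J2])
  then have J3: "((\<lambda>t. u t *v v) has_integral integral {0..1} (\<lambda>t. u t *v P m v)) {real m..real (Suc m)}"
    by simp
  have "((\<lambda>t. u t *v v) has_integral integral {0..1} (\<lambda>t. u t *v (\<Sum>k<m. P k v))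
          + integral {0..1} (\<lambda>t. u t *v P m v)) {0..real (Suc m)}"
    by (rule has_integral_combine[OF _ _ Suc J3]) auto
  moreover have "integral {0..1} (\<lambda>t. u t *v (\<Sum>k<m. P k v)) + integral {0..1} (\<lambda>t. u t *v P m v)
     = integral {0..1} (\<lambda>t. u t *v (\<Sum>k<Suc m. P k v))"
    by (simp add: integral_add[OF int_sol int_sol, symmetric] matrix_vector_right_distrib)
  ultimately show ?case by simp
qed

lemma main_int:
  assumes n: "n > 1" and closes: "u (real n) = mat 1"
    and first: "\<forall>j::nat. 1 \<le> j \<and> j < n \<longrightarrow> u (real j) \<noteq> mat 1"
  shows "integral {0..real n} (\<lambda>t. u t *v v) = 0"
proof -
  define U where "U = u 1"
  have ne: "U \<noteq> mat 1" using first[rule_format, of 1] n unfolding U_def by simp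
  have PU: "P k = ((*v) U ^^ k)" for k by (simp add: P_def U_def)
  have pn: "((*v) U ^^ n) w = w" for w
    using uk[of n w] closes by (simp add: PU)
  have jc: "U *v jr w = jr (U *v w)" for w unfolding U_def by (rule jcomm) simp
  have W: "Wc (U *v axis 1 1) (U *v axis 3 1) = 1"
    unfolding U_def wronsk by (simp add: Wc_def Zc_def Pc_def axis_def complex_eq_iff)
  define s where "s = (\<Sum>k<n. P k v)"
  have "U *v s = (\<Sum>k<n. U *v P k v)" unfolding s_def
    by (rule linear_sum[OF matrix_vector_mul_linear])
  also have "\<dots> = (\<Sum>k<n. P (Suc k) v)" by (simp add: PU)
  also have "\<dots> = s"
  proof -
    have "(\<Sum>k<Suc n. P k v) = P 0 v + (\<Sum>k<n. P (Suc k) v)" by (rule sum.lessThan_Suc_shift)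
    moreover have "(\<Sum>k<Suc n. P k v) = s + P n v" unfolding s_def by simp
    moreover have "P n v = v" "P 0 v = v" using pn by (simp_all add: PU)
    ultimately show ?thesis by simp
  qed
  finally have "U *v s = s" .
  then have "s = 0" using fixed_zero[OF jc W pn _ ne] n by simp
  have "integral {0..real n} (\<lambda>t. u t *v v) = integral {0..1} (\<lambda>t. u t *v s)"
    unfolding s_def using decomp[of v n] by (rule integral_unique)
  then show ?thesis using \<open>s = 0\<close> by simp
qed

end

theorem proposition3:
  fixes \<beta> :: "real \<Rightarrow> real" and u :: "real \<Rightarrow> real^4^4" and n :: nat
  assumes pc: "piecewise_continuous \<beta>"
    and per: "\<forall>t. \<beta> (t + 1) = \<beta> t"
    and zero_int: "\<forall>k::int. \<beta> (of_int k) = 0"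
    and mean_zero: "integral {0..1} \<beta> = 0"
    and evol: "is_evolution \<beta> u"
    and n_gt: "n > 1"
    and closes: "u (real n) = mat 1"
    and first: "\<forall>j::nat. 1 \<le> j \<and> j < n \<longrightarrow> u (real j) \<noteq> mat 1"
  shows "\<forall>v :: real^4.
           (1 / real n) *\<^sub>R integral {0..real n} (\<lambda>t. vector [(u t *v v) $ 1, (u t *v v) $ 2] :: real^2) = 0"
proof
  fix v :: "real^4"
  interpret qsys \<beta> u using pc per mean_zero evol by unfold_locales
  define pr :: "real^4 \<Rightarrow> real^2" where "pr w = vector [w $ 1, w $ 2]" for w
  have blp: "bounded_linear pr"
  proof -
    have "linear pr" by (rule linearI) (simp_all add: pr_def vec_eq_iff forall_2)
    then show ?thesis by (simp add: linear_conv_bounded_linear)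
  qed
  have "integral {0..real n} (\<lambda>t. vector [(u t *v v) $ 1, (u t *v v) $ 2] :: real^2)
        = integral {0..real n} (pr \<circ> (\<lambda>t. u t *v v))" by (simp add: pr_def o_def)
  also have "\<dots> = pr (integral {0..real n} (\<lambda>t. u t *v v))"
    by (rule integral_linear[OF int_sol blp]) simp
  also have "\<dots> = pr 0" using main_int[OF n_gt closes first] by simp
  also have "\<dots> = 0" by (simp add: pr_def vec_eq_iff forall_2)
  finally show "(1 / real n) *\<^sub>R integral {0..real n} (\<lambda>t. vector [(u t *v v) $ 1, (u t *v v) $ 2] :: real^2) = 0"
    by simp
qed


end
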